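(* There is a constant $N>0$ such that for every discriminant $D\in\mathcal{O}_d$ with $|D|>N$ the following holds: if $\epsilon_D=\frac12(t_0+u_0\sqrt{D})$ is a fundamental solution of $t^2-u^2D=4$ and $\epsilon_D^{\,n+1}=\frac12(t_n+u_n\sqrt{D})$ with $t_n,u_n\in\mathcal{O}_d$, then $|t_n|<\frac49|u_n|^2$ for all $n\ge 2$.
   Context: $d\in\{1,2,3,7,11,19,43,67,163\}$ (so $k_d=\mathbb{Q}(\sqrt{-d})$ has class number one), $\mathcal{O}_d$ is the ring of integers of $k_d$. An element $D\in\mathcal{O}_d$ is a discriminant if $D$ is not a perfect square in $\mathcal{O}_d$ and $D\equiv x^2\pmod{4\mathcal{O}_d}$ for some $x\in\mathcal{O}_d$. The square root $\sqrt{D}$ is chosen with argument in $[0,\pi)$. For a solution $(t,u)\in\mathcal{O}_d^2$ of $t^2-u^2D=4$ set $\epsilon_{t,u}=\frac12(t+u\sqrt{D})$. A solution $(t_0,u_0)$ is fundamental if $|\epsilon_{t_0,u_0}|$ is the smallest value larger than $1$ among all $|\epsilon_{t,u}|$; then $\epsilon_D=\epsilon_{t_0,u_0}$. *)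

theory Defs
  imports "HOL-Analysis.Analysis"
begin

text \<open>The admissible values of d (class number one imaginary quadratic fields).\<close>
definition class_one_d :: "nat set" where
  "class_one_d = {1, 2, 3, 7, 11, 19, 43, 67, 163}"

text \<open>The ring of integers of Q(sqrt(-d)), as a subset of the complex numbers
  (d squarefree positive): Z[sqrt(-d)] if d = 1,2 mod 4, Z[(1+sqrt(-d))/2] if d = 3 mod 4.\<close>
definition omega_d :: "nat \<Rightarrow> complex" where
  "omega_d d = (if d mod 4 = 3 then (1 + \<i> * complex_of_real (sqrt (real d))) / 2
                else \<i> * complex_of_real (sqrt (real d)))"

definition O_d :: "nat \<Rightarrow> complex set" where
  "O_d d = {of_int a + of_int b * omega_d d | a b. True}"

definition discriminant :: "nat \<Rightarrow> complex \<Rightarrow> bool" where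
  "discriminant d D \<longleftrightarrow> D \<in> O_d d \<and> \<not> (\<exists>y\<in>O_d d. D = y ^ 2) \<and>
     (\<exists>x\<in>O_d d. \<exists>z\<in>O_d d. D - x ^ 2 = 4 * z)"

definition sqrtD :: "complex \<Rightarrow> complex" where
  "sqrtD D = (THE z. z ^ 2 = D \<and> 0 \<le> Arg z \<and> Arg z < pi)"

definition eps :: "complex \<Rightarrow> complex \<Rightarrow> complex \<Rightarrow> complex" where
  "eps D t u = (t + u * sqrtD D) / 2"

definition pell_sol :: "nat \<Rightarrow> complex \<Rightarrow> complex \<Rightarrow> complex \<Rightarrow> bool" where
  "pell_sol d D t u \<longleftrightarrow> t \<in> O_d d \<and> u \<in> O_d d \<and> t ^ 2 - u ^ 2 * D = 4"

definition fundamental_sol :: "nat \<Rightarrow> complex \<Rightarrow> complex \<Rightarrow> complex \<Rightarrow> bool" where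
  "fundamental_sol d D t0 u0 \<longleftrightarrow> pell_sol d D t0 u0 \<and> norm (eps D t0 u0) > 1 \<and>
     (\<forall>t u. pell_sol d D t u \<and> norm (eps D t u) > 1 \<longrightarrow> norm (eps D t0 u0) \<le> norm (eps D t u))"

end

theory Submission
  imports Defs
begin
lemma sqfree_aux:
  fixes b :: int
  assumes "d \<in> class_one_d" "b > 0" "b^2 dvd int d"
  shows "b = 1"
proof -
  have d: "d = 1 \<or> d = 2 \<or> d = 3 \<or> d = 7 \<or> d = 11 \<or> d = 19 \<or> d = 43 \<or> d = 67 \<or> d = 163" using assms(1) by (simp add: class_one_d_def)
  have "d > 0" using d by auto
  hence "b^2 \<le> int d" using assms(3) by (simp add: zdvd_imp_le)
  also have "\<dots> \<le> 163" using d by auto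
  finally have "b^2 \<le> 13^2" by simp
  hence "b \<le> 13" using assms(2) power2_le_imp_le[of b 13] by simp
  hence "b = 1 \<or> b = 2 \<or> b = 3 \<or> b = 4 \<or> b = 5 \<or> b = 6 \<or> b = 7 \<or> b = 8 \<or> b = 9 \<or> b = 10 \<or> b = 11 \<or> b = 12 \<or> b = 13"
    using assms(2) by presburger
  thus ?thesis using d assms(3) by (elim disjE; simp)
qed
lemma rat_int_aux:
  fixes x :: real
  assumes "d \<in> class_one_d" "x \<in> \<rat>" "real d * x^2 \<in> \<int>"
  shows "x \<in> \<int>"
proof -
  obtain a b :: int where ab: "b > 0" "coprime a b" "x = of_int a / of_int b"
    using assms(2) by (auto elim: Rats_cases')
  obtain k :: int where k: "real d * x^2 = of_int k" using assms(3) by (auto elim: Ints_cases)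
  have "real d * (of_int a)^2 = of_int k * (of_int b)^2"
    using k ab(1) unfolding ab(3) by (simp add: field_simps power2_eq_square)
  hence "of_int (int d * a^2) = (of_int (k * b^2) :: real)" by simp
  hence "int d * a^2 = k * b^2" by (simp only: of_int_eq_iff)
  hence "b^2 dvd int d * a^2" by simp
  moreover have "coprime (b^2) (a^2)" using ab(2) by (simp add: coprime_commute)
  ultimately have "b^2 dvd int d" using coprime_dvd_mult_left_iff by blast
  hence "b = 1" using sqfree_aux assms(1) ab(1) by blast
  thus ?thesis using ab(3) by simp
qed

lemma d_cases: "d \<in> class_one_d \<Longrightarrow> d > 0 \<and> (d mod 4 = 3 \<or> d = 1 \<or> d = 2)"
  by (auto simp: class_one_d_def)

lemma sd_sq: "(complex_of_real (sqrt (real d)))^2 = of_nat d"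
  by (metis of_real_of_nat_eq of_real_power of_nat_0_le_iff real_sqrt_pow2)

lemma Re_omega: "Re (omega_d d) = (if d mod 4 = 3 then 1/2 else 0)"
  by (simp add: omega_d_def)
lemma Im_omega: "Im (omega_d d) = (if d mod 4 = 3 then sqrt (real d) / 2 else sqrt (real d))"
  by (simp add: omega_d_def)

lemma Od_iff: "z \<in> O_d d \<longleftrightarrow> (\<exists>a b. z = of_int a + of_int b * omega_d d)"
  by (auto simp: O_d_def)

lemma Od_intro: "z = of_int a + of_int b * omega_d d \<Longrightarrow> z \<in> O_d d"
  by (auto simp: O_d_def)

lemma omega_sq3:
  assumes "d mod 4 = 3"
  shows "(omega_d d)^2 = omega_d d - of_int ((int d + 1) div 4)"
proof -
  have "d + 1 = 4 * ((d + 1) div 4)" using assms by presburger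
  then obtain k0 :: nat where "d + 1 = 4 * k0" by blast
  hence k: "int d + 1 = 4 * int k0" by linarith
  define k where "k = int k0"
  note k = k[folded k_def]
  have kk: "(int d + 1) div 4 = k" using k by simp
  have e2: "complex_of_int k * 8 = 2 + of_nat d * 2"
    using arg_cong[OF k, of "\<lambda>x. 2 * (of_int x :: complex)"] by (simp add: algebra_simps)
  show ?thesis using assms unfolding omega_d_def kk
    by (simp add: power2_eq_square field_simps sd_sq[unfolded power2_eq_square] e2)
qed

lemma omega_sq12:
  assumes "d mod 4 \<noteq> 3"
  shows "(omega_d d)^2 = - of_nat d"
  using assms unfolding omega_d_def by (simp add: power_mult_distrib sd_sq)

lemma Od_int: "of_int n \<in> O_d d"
  by (rule Od_intro[of _ n 0]) simp

lemma Od_add: assumes "z \<in> O_d d" "w \<in> O_d d" shows "z + w \<in> O_d d"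
proof -
  obtain a b a' b' where "z = of_int a + of_int b * omega_d d" "w = of_int a' + of_int b' * omega_d d"
    using assms by (auto simp: Od_iff)
  thus ?thesis by (intro Od_intro[of _ "a + a'" "b + b'"]) (simp add: algebra_simps)
qed

lemma Od_uminus: assumes "z \<in> O_d d" shows "- z \<in> O_d d"
proof -
  obtain a b where "z = of_int a + of_int b * omega_d d"
    using assms by (auto simp: Od_iff)
  thus ?thesis by (intro Od_intro[of _ "- a" "- b"]) (simp add: algebra_simps)
qed

lemma Od_diff: "z \<in> O_d d \<Longrightarrow> w \<in> O_d d \<Longrightarrow> z - w \<in> O_d d"
  using Od_add[of z d "-w"] Od_uminus[of w d] by simp

lemma Od_mult: assumes "z \<in> O_d d" "w \<in> O_d d" shows "z * w \<in> O_d d"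
proof -
  obtain a b a' b' where zw: "z = of_int a + of_int b * omega_d d" "w = of_int a' + of_int b' * omega_d d"
    using assms by (auto simp: Od_iff)
  have e: "z * w = of_int (a*a') + of_int (a*b' + b*a') * omega_d d + of_int (b*b') * (omega_d d)^2"
    unfolding zw by (simp add: algebra_simps power2_eq_square)
  show ?thesis
  proof (cases "d mod 4 = 3")
    case True
    show ?thesis unfolding e omega_sq3[OF True]
      by (intro Od_intro[of _ "a*a' - b*b'*((int d + 1) div 4)" "a*b' + b*a' + b*b'"]) (simp add: algebra_simps)
  next
    case False
    show ?thesis unfolding e omega_sq12[OF False]
      by (intro Od_intro[of _ "a*a' - b*b'* int d" "a*b' + b*a'"]) (simp add: algebra_simps)
  qed
qed

lemma Od_power: "z \<in> O_d d \<Longrightarrow> z ^ n \<in> O_d d"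
  by (induction n) (auto simp: Od_mult intro: Od_int[of 1, simplified])

lemma Od_cnj: assumes "z \<in> O_d d" shows "cnj z \<in> O_d d"
proof -
  obtain a b where z: "z = of_int a + of_int b * omega_d d"
    using assms by (auto simp: Od_iff)
  show ?thesis
  proof (cases "d mod 4 = 3")
    case True
    have c: "cnj (omega_d d) = 1 - omega_d d" using True by (simp add: omega_d_def complex_eq_iff)
    have "cnj z = of_int a + of_int b * (1 - omega_d d)" unfolding z c[symmetric] by simp
    thus ?thesis by (intro Od_intro[of _ "a + b" "- b"]) (simp add: algebra_simps)
  next
    case False
    have c: "cnj (omega_d d) = - omega_d d" using False by (simp add: omega_d_def complex_eq_iff)
    have "cnj z = of_int a + of_int b * (- omega_d d)" unfolding z c[symmetric] by simp
    thus ?thesis by (intro Od_intro[of _ "a" "- b"]) (simp add: algebra_simps)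
  qed
qed

lemma dvd4_aux: "(4::int) dvd 4 * m + r \<longleftrightarrow> 4 dvd r" by presburger
lemma par3:
  fixes p q D :: int
  assumes "4 dvd p^2 + D * q^2" "D mod 4 = 3"
  shows "even (p - q)"
proof (rule ccontr)
  assume a: "odd (p - q)"
  obtain k where D: "D = 4 * k + 3" using assms(2) by (metis mult.commute div_mult_mod_eq add.commute)
  show False
  proof (cases "even p")
    case True
    then obtain x where x: "p = 2 * x" by blast
    from True a have "odd q" by auto
    then obtain y where y: "q = 2 * y + 1" by (metis oddE)
    have "p^2 + D * q^2 = 4 * (x^2 + k * (4*y^2 + 4*y) + 3 * (y^2 + y) + k) + 3"
      unfolding x y D by (simp add: algebra_simps power2_eq_square)
    with assms(1) show False by (simp only: dvd4_aux) simp
  next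
    case False
    then obtain x where x: "p = 2 * x + 1" by (metis oddE)
    from False a have "even q" by auto
    then obtain y where y: "q = 2 * y" by blast
    have "p^2 + D * q^2 = 4 * (x^2 + x + D * y^2) + 1"
      unfolding x y by (simp add: algebra_simps power2_eq_square)
    with assms(1) show False by (simp only: dvd4_aux) simp
  qed
qed
lemma par12:
  fixes p q D :: int
  assumes "4 dvd p^2 + D * q^2" "D = 1 \<or> D = 2"
  shows "even p \<and> even q"
proof -
  have ep: "even p"
  proof (rule ccontr)
    assume "odd p"
    then obtain x where x: "p = 2 * x + 1" by (metis oddE)
    show False
    proof (cases "even q")
      case True
      then obtain y where y: "q = 2 * y" by blast
      have "p^2 + D * q^2 = 4 * (x^2 + x + D * y^2) + 1"
        unfolding x y by (simp add: algebra_simps power2_eq_square)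
      with assms(1) show False by (simp only: dvd4_aux) simp
    next
      case False
      then obtain y where y: "q = 2 * y + 1" by (metis oddE)
      show False using assms(2)
      proof
        assume D: "D = 1"
        have "p^2 + D * q^2 = 4 * (x^2 + x + y^2 + y) + 2"
          unfolding x y D by (simp add: algebra_simps power2_eq_square)
        with assms(1) show False by (simp only: dvd4_aux) simp
      next
        assume D: "D = 2"
        have "p^2 + D * q^2 = 4 * (x^2 + x + 2*y^2 + 2*y) + 3"
          unfolding x y D by (simp add: algebra_simps power2_eq_square)
        with assms(1) show False by (simp only: dvd4_aux) simp
      qed
    qed
  qed
  then obtain x where x: "p = 2 * x" by blast
  have "even q"
  proof (rule ccontr)
    assume "odd q"
    then obtain y where y: "q = 2 * y + 1" by (metis oddE)
    show False using assms(2)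
    proof
      assume D: "D = 1"
      have "p^2 + D * q^2 = 4 * (x^2 + y^2 + y) + 1"
        unfolding x y D by (simp add: algebra_simps power2_eq_square)
      with assms(1) show False by (simp only: dvd4_aux) simp
    next
      assume D: "D = 2"
      have "p^2 + D * q^2 = 4 * (x^2 + 2*y^2 + 2*y) + 2"
        unfolding x y D by (simp add: algebra_simps power2_eq_square)
      with assms(1) show False by (simp only: dvd4_aux) simp
    qed
  qed
  with ep show ?thesis by simp
qed
lemma real_d_3:
  assumes "d mod 4 = 3"
  shows "real d = 4 * of_int ((int d + 1) div 4) - 1"
proof -
  have "d + 1 = 4 * ((d + 1) div 4)" using assms by presburger
  then obtain k0 :: nat where k0: "d + 1 = 4 * k0" by blast
  hence "(int d + 1) div 4 = int k0" by linarith
  thus ?thesis using k0 by (simp add: algebra_simps)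
qed

lemma Od_normsq:
  assumes "z \<in> O_d d"
  shows "\<exists>n::int. (cmod z)^2 = of_int n"
proof -
  obtain a b where z: "z = of_int a + of_int b * omega_d d"
    using assms by (auto simp: Od_iff)
  have sq: "(sqrt (real d))^2 = real d" by simp
  show ?thesis
  proof (cases "d mod 4 = 3")
    case True
    let ?k = "(int d + 1) div 4"
    have "(cmod z)^2 = (a + b/2)^2 + (b * sqrt (real d) / 2)^2"
      unfolding cmod_power2 z using True by (simp add: Re_omega Im_omega)
    also have "\<dots> = a^2 + a*b + b^2 * ((real d + 1) / 4)"
      by (simp add: power_mult_distrib power_divide sq field_simps power2_eq_square)
    also have "(real d + 1) / 4 = of_int ?k" using real_d_3[OF True] by simp
    also have "a^2 + a*b + b^2 * real_of_int ?k = of_int (a^2 + a*b + b^2 * ?k)" by simp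
    finally show ?thesis by blast
  next
    case False
    have "(cmod z)^2 = a^2 + (b * sqrt (real d))^2"
      unfolding cmod_power2 z using False by (simp add: Re_omega Im_omega)
    also have "\<dots> = of_int (a^2 + b^2 * int d)"
      by (simp add: power_mult_distrib sq)
    finally show ?thesis by blast
  qed
qed

lemma Od_norm_ge1:
  assumes "z \<in> O_d d" "z \<noteq> 0"
  shows "cmod z \<ge> 1"
proof -
  obtain n :: int where n: "(cmod z)^2 = of_int n" using Od_normsq[OF assms(1)] by blast
  have "(cmod z)^2 > 0" using assms(2) by simp
  hence "n \<ge> 1" using n by simp
  hence "(cmod z)^2 \<ge> 1^2" using n by simp
  thus ?thesis by (rule power2_le_imp_le) simp
qed

lemma Od_coords:
  assumes "z \<in> O_d d"
  shows "\<exists>p::int. \<exists>q::int. Re z = p / 2 \<and> Im z = q * sqrt (real d) / 2"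
proof -
  obtain a b where z: "z = of_int a + of_int b * omega_d d"
    using assms by (auto simp: Od_iff)
  show ?thesis
  proof (cases "d mod 4 = 3")
    case True
    have "Re z = of_int (2*a + b) / 2 \<and> Im z = of_int b * sqrt (real d) / 2"
      unfolding z using True by (simp add: Re_omega Im_omega field_simps)
    thus ?thesis by blast
  next
    case False
    have "Re z = of_int (2*a) / 2 \<and> Im z = of_int (2*b) * sqrt (real d) / 2"
      unfolding z using False by (simp add: Re_omega Im_omega field_simps)
    thus ?thesis by blast
  qed
qed

lemma Od_from_coords:
  fixes p q n :: int
  assumes d: "d \<in> class_one_d"
    and z: "Re z = p / 2" "Im z = q * sqrt (real d) / 2" and n: "(cmod z)^2 = of_int n"
  shows "z \<in> O_d d"
proof -
  have sq: "(sqrt (real d))^2 = real d" by simp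
  have "real_of_int (4 * n) = of_int (p^2 + int d * q^2)"
    using n unfolding cmod_power2 z by (simp add: power_mult_distrib power_divide sq field_simps)
  hence "4 * n = p^2 + int d * q^2" by (simp only: of_int_eq_iff)
  hence dv: "4 dvd p^2 + int d * q^2" by (metis dvd_triv_left)
  show ?thesis
  proof (cases "d mod 4 = 3")
    case True
    have "int d mod 4 = 3" using True by presburger
    from par3[OF dv this] obtain a where a: "p - q = 2 * a" by blast
    show ?thesis
    proof (rule Od_intro[of _ a q])
      show "z = of_int a + of_int q * omega_d d"
        using True a z by (simp add: complex_eq_iff Re_omega Im_omega field_simps)
    qed
  next
    case False
    hence "int d = 1 \<or> int d = 2" using d_cases[OF d] by auto
    from par12[OF dv this] obtain a b where a: "p = 2 * a" "q = 2 * b" by blast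
    show ?thesis
    proof (rule Od_intro[of _ a b])
      show "z = of_int a + of_int b * omega_d d"
        using False a z by (simp add: complex_eq_iff Re_omega Im_omega field_simps)
    qed
  qed
qed

definition inK :: "nat \<Rightarrow> complex \<Rightarrow> bool" where
  "inK d c \<longleftrightarrow> (\<exists>\<beta>\<in>O_d d. \<beta> \<noteq> 0 \<and> c * \<beta> \<in> O_d d)"

lemma Od_1: "1 \<in> O_d d" using Od_int[of 1 d] by simp
lemma Od_0: "0 \<in> O_d d" using Od_int[of 0 d] by simp

lemma K_Od: "z \<in> O_d d \<Longrightarrow> inK d z"
  unfolding inK_def by (intro bexI[of _ 1]) (auto simp: Od_1)

lemma K_add: assumes "inK d z" "inK d w" shows "inK d (z + w)"
proof -
  obtain b where b: "b \<in> O_d d" "b \<noteq> 0" "z * b \<in> O_d d" using assms(1) by (auto simp: inK_def)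
  obtain b' where b': "b' \<in> O_d d" "b' \<noteq> 0" "w * b' \<in> O_d d" using assms(2) by (auto simp: inK_def)
  have "(z + w) * (b * b') = (z * b) * b' + (w * b') * b" by (simp add: algebra_simps)
  hence "(z + w) * (b * b') \<in> O_d d" using b b' by (simp add: Od_add Od_mult)
  thus ?thesis unfolding inK_def using b b' by (intro bexI[of _ "b * b'"]) (auto simp: Od_mult)
qed

lemma K_mult: assumes "inK d z" "inK d w" shows "inK d (z * w)"
proof -
  obtain b where b: "b \<in> O_d d" "b \<noteq> 0" "z * b \<in> O_d d" using assms(1) by (auto simp: inK_def)
  obtain b' where b': "b' \<in> O_d d" "b' \<noteq> 0" "w * b' \<in> O_d d" using assms(2) by (auto simp: inK_def)
  have e: "(z * w) * (b * b') = (z * b) * (w * b')" by (simp add: algebra_simps)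
  have "(z * w) * (b * b') \<in> O_d d" unfolding e by (rule Od_mult[OF b(3) b'(3)])
  thus ?thesis unfolding inK_def using b b' by (intro bexI[of _ "b * b'"]) (auto simp: Od_mult)
qed

lemma K_uminus: assumes "inK d z" shows "inK d (- z)"
proof -
  obtain b where b: "b \<in> O_d d" "b \<noteq> 0" "z * b \<in> O_d d" using assms(1) by (auto simp: inK_def)
  thus ?thesis unfolding inK_def using Od_uminus[OF b(3)] by (intro bexI[of _ b]) auto
qed

lemma K_diff: "inK d z \<Longrightarrow> inK d w \<Longrightarrow> inK d (z - w)"
  using K_add[of d z "- w"] K_uminus[of d w] by simp

lemma K_div: assumes "inK d z" "inK d w" "w \<noteq> 0" shows "inK d (z / w)"
proof -
  obtain b where b: "b \<in> O_d d" "b \<noteq> 0" "z * b \<in> O_d d" using assms(1) by (auto simp: inK_def)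
  obtain b' where b': "b' \<in> O_d d" "b' \<noteq> 0" "w * b' \<in> O_d d" using assms(2) by (auto simp: inK_def)
  have "(z / w) * (w * b' * b) = (z * b) * b'" using assms(3) by (simp add: field_simps)
  hence "(z / w) * (w * b' * b) \<in> O_d d" using b b' by (simp add: Od_mult)
  thus ?thesis unfolding inK_def using b b' assms(3) by (intro bexI[of _ "w * b' * b"]) (auto simp: Od_mult)
qed

lemma K_half: "inK d z \<Longrightarrow> inK d (z / 2)"
  using K_div[of d z 2] K_Od[OF Od_int[of 2 d]] by simp

lemma sqrt_in_Od:
  assumes d: "d \<in> class_one_d" and K: "inK d c" and c2: "c^2 \<in> O_d d"
  shows "c \<in> O_d d"
proof -
  obtain b where b: "b \<in> O_d d" "b \<noteq> 0" "c * b \<in> O_d d" using K by (auto simp: inK_def)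
  define g where "g = c * b * cnj b"
  have g: "g \<in> O_d d" unfolding g_def using b Od_cnj Od_mult by blast
  obtain m :: int where m: "(cmod b)^2 = of_int m" using Od_normsq[OF b(1)] by blast
  have Mpos: "(cmod b)^2 > 0" using b(2) by simp
  hence mpos: "real_of_int m > 0" using m by simp
  have gc: "g = c * of_real (of_int m)" unfolding g_def using complex_norm_square[of b] m
    by (simp add: mult.assoc)
  have cg: "c = g / of_real (of_int m)" using gc mpos by (simp add: field_simps)
  obtain p q :: int where pq: "Re g = p / 2" "Im g = q * sqrt (real d) / 2" using Od_coords[OF g] by blast
  obtain ng :: int where ng: "(cmod g)^2 = of_int ng" using Od_normsq[OF g] by blast
  obtain p2 q2 :: int where pq2: "Re (c^2) = p2 / 2" "Im (c^2) = q2 * sqrt (real d) / 2" using Od_coords[OF c2] by blast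
  obtain n2 :: int where n2: "(cmod (c^2))^2 = of_int n2" using Od_normsq[OF c2] by blast
  have sdpos: "sqrt (real d) > 0" using d_cases[OF d] by simp
  have sq: "(sqrt (real d))^2 = real d" by simp
  have "Re c = Re g / m" unfolding cg using mpos by (simp add: Re_divide_of_real)
  hence Rec: "Re c = p / (2 * m)" using pq by simp
  have "Im c = Im g / m" unfolding cg using mpos by (simp add: Im_divide_of_real)
  hence Imc: "Im c = q * sqrt (real d) / (2 * m)" using pq by simp
  define X where "X = (cmod c)^2"
  have X_rat: "X \<in> \<rat>"
  proof -
    have "cmod c = cmod g / of_int m" using cg mpos by (simp add: norm_divide)
    hence "X = of_int ng / (of_int m)^2" unfolding X_def using ng by (simp add: power_divide)
    thus ?thesis by simp
  qed
  have "real 1 * X^2 = of_int n2" unfolding X_def using n2 by (simp add: norm_power power_mult_distrib[symmetric] power_mult)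
  hence "X \<in> \<int>" using rat_int_aux[of 1 X] X_rat by (simp add: class_one_d_def)
  then obtain x :: int where x: "X = of_int x" by (auto elim: Ints_cases)
  define P where "P = 2 * Re c"
  have P_rat: "P \<in> \<rat>" unfolding P_def Rec using mpos by simp
  have XRI: "X = (Re c)^2 + (Im c)^2" unfolding X_def by (simp add: cmod_power2)
  have "Re (c^2) = (Re c)^2 - (Im c)^2" by (simp add: power2_eq_square)
  hence "real 1 * P^2 = of_int (p2 + 2 * x)" unfolding P_def using pq2 x XRI by (simp add: power_mult_distrib)
  hence "P \<in> \<int>" using rat_int_aux[of 1 P] P_rat by (simp add: class_one_d_def)
  then obtain pp :: int where pp: "P = of_int pp" by (auto elim: Ints_cases)
  define Q where "Q = 2 * Im c / sqrt (real d)"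
  have Qe: "Q = q / m" unfolding Q_def Imc using sdpos mpos by simp
  have Q_rat: "Q \<in> \<rat>" unfolding Qe by simp
  have "2 * Im c = Q * sqrt (real d)" unfolding Q_def using sdpos by simp
  hence "(2 * Im c)^2 = (Q * sqrt (real d))^2" by simp
  hence "4 * (Im c)^2 = Q^2 * (sqrt (real d))^2" by (simp only: power_mult_distrib) simp
  hence "real d * Q^2 = 4 * (Im c)^2" using sq by simp
  also have "\<dots> = 4 * X - P^2" unfolding XRI P_def by (simp add: power_mult_distrib)
  also have "\<dots> = of_int (4 * x - pp^2)" using x pp by simp
  finally have "Q \<in> \<int>" using rat_int_aux[OF d Q_rat] by simp
  then obtain qq :: int where qq: "Q = of_int qq" by (auto elim: Ints_cases)
  show ?thesis
  proof (rule Od_from_coords[OF d, of c pp qq x])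
    show "Re c = real_of_int pp / 2" using pp unfolding P_def by simp
    show "Im c = real_of_int qq * sqrt (real d) / 2" using qq unfolding Q_def using sdpos by (simp add: field_simps)
    show "(cmod c)^2 = real_of_int x" using x X_def by simp
  qed
qed


lemma Arg_P_iff: "(0 \<le> Arg z \<and> Arg z < pi) \<longleftrightarrow> (Im z > 0 \<or> (Im z = 0 \<and> Re z \<ge> 0))"
proof -
  have "Arg z < pi \<longleftrightarrow> Arg z \<noteq> pi" using Arg_le_pi[of z] by auto
  thus ?thesis using Arg_less_0[of z] Arg_eq_pi[of z] by auto
qed

lemma sqrtD_sq:
  assumes "D \<noteq> 0"
  shows "(sqrtD D)^2 = D"
proof -
  let ?P = "\<lambda>z. z^2 = D \<and> 0 \<le> Arg z \<and> Arg z < pi"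
  have ex: "\<exists>z. ?P z"
  proof (cases "0 \<le> Arg (csqrt D) \<and> Arg (csqrt D) < pi")
    case True thus ?thesis by (intro exI[of _ "csqrt D"]) simp
  next
    case False
    hence "0 \<le> Arg (- csqrt D) \<and> Arg (- csqrt D) < pi" unfolding Arg_P_iff by auto
    thus ?thesis by (intro exI[of _ "- csqrt D"]) simp
  qed
  have un: "y = z" if "?P y" "?P z" for y z
  proof -
    have "(y - z) * (y + z) = 0" using that by (simp add: algebra_simps power2_eq_square)
    hence "y = z \<or> y = - z" by (auto simp: add_eq_0_iff)
    moreover have "y \<noteq> - z"
    proof
      assume yz: "y = - z"
      have "z \<noteq> 0" using that(2) assms by auto
      thus False using that(1,2) unfolding yz Arg_P_iff by (auto simp: complex_eq_iff)
    qed
    ultimately show ?thesis by blast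
  qed
  have "?P (THE z. ?P z)" by (rule theI') (use ex un in blast)
  thus ?thesis unfolding sqrtD_def by simp
qed

lemma final_ineq:
  fixes r F :: real
  assumes r: "r > 100" and F: "F > (r - 1)^3"
  shows "9 * r^2 * (F + 1) < 4 * (F - 1)^2"
proof -
  have r1: "r - 1 \<ge> 99" using r by simp
  have "(r - 1)^3 = (r - 1) * (r - 1)^2" by (simp add: power3_eq_cube power2_eq_square)
  also have "\<dots> \<ge> 99 * (r - 1)^2" using r1 by (intro mult_right_mono) auto
  finally have a: "(r-1)^3 \<ge> 99 * (r - 1)^2" .
  have "r - 1 \<ge> (99/100) * r" using r by simp
  hence "(r - 1)^2 \<ge> ((99/100) * r)^2" using r by (intro power_mono) auto
  also have "((99/100) * r)^2 = (9801/10000) * r^2" by (simp add: power2_eq_square)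
  finally have b: "(r - 1)^2 \<ge> (9801/10000) * r^2" .
  have "(r-1)^3 \<ge> 97 * r^2" using a b zero_le_power2[of r] by linarith
  hence G: "F - 1 > 96 * r^2" using F r by (smt (verit) one_le_power)
  have r2: "r^2 > 1" using r by (intro one_less_power) auto
  hence "F - 1 > 2" using G by simp
  hence "F + 1 < 2 * (F - 1)" by simp
  hence "9 * r^2 * (F + 1) < 9 * r^2 * (2 * (F - 1))" using r2 by (intro mult_strict_left_mono) auto
  also have "\<dots> = (18 * r^2) * (F - 1)" by simp
  also have "\<dots> < 4 * (F - 1) * (F - 1)" using G \<open>F - 1 > 2\<close> by (intro mult_strict_right_mono) auto
  finally show ?thesis by (simp add: power2_eq_square algebra_simps)
qed
lemma K_unique:
  assumes "inK d A" "inK d B" "inK d A'" "inK d B'" "\<not> inK d s" "A + B * s = A' + B' * s"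
  shows "A = A' \<and> B = B'"
proof -
  have BB: "B = B'"
  proof (rule ccontr)
    assume ne: "B \<noteq> B'"
    have "s = (A' - A) / (B - B')" using assms(6) ne by (simp add: field_simps)
    moreover have "inK d ((A' - A) / (B - B'))"
      using ne by (intro K_div K_diff assms(1-4)) simp
    ultimately show False using assms(5) by simp
  qed
  thus ?thesis using assms(6) by simp
qed

lemma pow_rep:
  assumes t: "inK d t" and u: "inK d u" and ss: "s * s = D" and D: "inK d D"
  shows "\<exists>A B. inK d A \<and> inK d B \<and> ((t + u * s)/2)^k = A + B * s \<and> ((t - u * s)/2)^k = A - B * s"
proof (induction k)
  case 0
  show ?case by (intro exI[of _ 1] exI[of _ 0]) (simp add: K_Od Od_1 Od_0)
next
  case (Suc k)
  then obtain A B where AB: "inK d A" "inK d B" "((t + u * s)/2)^k = A + B * s" "((t - u * s)/2)^k = A - B * s"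
    by blast
  define A' where "A' = (A * t + B * u * D) / 2"
  define B' where "B' = (A * u + B * t) / 2"
  have K: "inK d A'" "inK d B'" unfolding A'_def B'_def
    by (intro K_half K_add K_mult AB t u D)+
  have "((t + u * s)/2)^Suc k = A' + B' * s"
    unfolding power_Suc2 AB(3) A'_def B'_def ss[symmetric] by (simp add: field_simps)
  moreover have "((t - u * s)/2)^Suc k = A' - B' * s"
    unfolding power_Suc2 AB(4) A'_def B'_def ss[symmetric] by (simp add: field_simps)
  ultimately show ?case using K by blast
qed

theorem lemma4p5:
  fixes d :: nat
  assumes "d \<in> class_one_d"
  shows "\<exists>N::real. N > 0 \<and>
    (\<forall>D t0 u0. discriminant d D \<and> norm D > N \<and> fundamental_sol d D t0 u0 \<longrightarrow>
      (\<forall>n::nat. \<forall>tn un. n \<ge> 2 \<and> tn \<in> O_d d \<and> un \<in> O_d d \<and>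
          eps D t0 u0 ^ (n + 1) = eps D tn un \<longrightarrow>
          norm tn < 4 / 9 * norm un ^ 2))"
proof (intro exI[of _ 10000] conjI allI impI)
  fix D t0 u0 n tn un
  assume H1: "discriminant d D \<and> norm D > 10000 \<and> fundamental_sol d D t0 u0"
  assume H2: "2 \<le> n \<and> tn \<in> O_d d \<and> un \<in> O_d d \<and> eps D t0 u0 ^ (n + 1) = eps D tn un"
  have dd: "d \<in> class_one_d" by fact
  have nD: "norm D > 10000" using H1 by blast
  hence D0: "D \<noteq> 0" by auto
  have DO: "D \<in> O_d d" and nsq: "\<not> (\<exists>y\<in>O_d d. D = y ^ 2)" using H1 by (auto simp: discriminant_def)
  have t0: "t0 \<in> O_d d" and u0: "u0 \<in> O_d d" and pell: "t0^2 - u0^2 * D = 4"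
    and e1: "norm (eps D t0 u0) > 1"
    using H1 by (auto simp: fundamental_sol_def pell_sol_def)
  have n2: "n \<ge> 2" and tn: "tn \<in> O_d d" and un: "un \<in> O_d d"
    and hyp: "eps D t0 u0 ^ (n + 1) = eps D tn un" using H2 by auto
  define s where "s = sqrtD D"
  have ss: "s * s = D" using sqrtD_sq[OF D0] unfolding s_def by (simp add: power2_eq_square)
  have sK: "\<not> inK d s"
  proof
    assume "inK d s"
    hence "s \<in> O_d d" using sqrt_in_Od[OF dd] DO ss by (simp add: power2_eq_square)
    thus False using nsq ss by (auto simp: power2_eq_square)
  qed
  define ep where "ep = (t0 + u0 * s) / 2"
  define ep' where "ep' = (t0 - u0 * s) / 2"
  have ep_eps: "eps D t0 u0 = ep" unfolding ep_def eps_def s_def by simp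
  have prod: "ep * ep' = 1"
  proof -
    have "ep * ep' = (t0^2 - u0^2 * (s * s)) / 4" unfolding ep_def ep'_def
      by (simp add: field_simps power2_eq_square)
    also have "\<dots> = 1" using pell ss by simp
    finally show ?thesis .
  qed
  have ep0: "ep \<noteq> 0" using prod by auto
  have ep'_inv: "ep' = 1 / ep" using prod ep0 by (simp add: field_simps)
  obtain A B where AB: "inK d A" "inK d B" "ep ^ (n+1) = A + B * s" "ep' ^ (n+1) = A - B * s"
    using pow_rep[OF K_Od[OF t0] K_Od[OF u0] ss K_Od[OF DO], of "n+1"] unfolding ep_def ep'_def by blast
  have "eps D tn un = tn / 2 + (un / 2) * s" unfolding eps_def s_def by (simp add: field_simps)
  hence "ep ^ (n+1) = tn / 2 + (un / 2) * s" using hyp ep_eps by simp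
  hence "A = tn / 2 \<and> B = un / 2"
    using K_unique[OF AB(1,2) K_half[OF K_Od[OF tn]] K_half[OF K_Od[OF un]] sK] AB(3) by simp
  hence AB': "A = tn / 2" "B = un / 2" by auto
  define E where "E = ep ^ (n+1)"
  have E0: "E \<noteq> 0" unfolding E_def using ep0 by simp
  have E': "ep' ^ (n+1) = 1 / E" unfolding E_def ep'_inv by (simp add: power_one_over)
  have a: "E = tn/2 + un/2 * s" using AB(3) AB'(1,2) unfolding E_def by simp
  have b: "1/E = tn/2 - un/2 * s" using AB(4) AB'(1,2) E' by simp
  from a b have "E + 1/E = (tn/2 + un/2 * s) + (tn/2 - un/2 * s)" by (rule arg_cong2[where f="(+)"])
  hence tnE: "tn = E + 1 / E" by simp
  from a b have "E - 1/E = (tn/2 + un/2 * s) - (tn/2 - un/2 * s)" by (rule arg_cong2[where f="(-)"])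
  hence unE: "un * s = E - 1 / E" by simp
  define e where "e = cmod ep"
  have e1': "e > 1" using e1 unfolding e_def ep_eps .
  have u00: "u0 \<noteq> 0"
  proof
    assume "u0 = 0"
    hence "ep = ep'" unfolding ep_def ep'_def by simp
    hence "ep * ep = 1" using prod by simp
    hence "e * e = 1" unfolding e_def by (metis norm_mult norm_one)
    moreover have "e * e > 1 * 1" using e1' by (intro mult_strict_mono) auto
    ultimately show False by simp
  qed
  have nu0: "cmod u0 \<ge> 1" using Od_norm_ge1[OF u0 u00] .
  define r where "r = cmod s"
  have r2: "r^2 = cmod D" unfolding r_def using ss by (metis norm_mult power2_eq_square)
  have r0: "r \<ge> 0" unfolding r_def by simp
  have r100: "r > 100"
  proof (rule ccontr)
    assume "\<not> r > 100"
    hence "r^2 \<le> 100^2" using r0 by (intro power_mono) auto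
    thus False using r2 nD by simp
  qed
  have "ep - ep' = u0 * s" unfolding ep_def ep'_def by (simp add: field_simps)
  hence "cmod (ep - ep') = cmod u0 * r" unfolding r_def by (simp add: norm_mult)
  moreover have "cmod u0 * r \<ge> 1 * r" using nu0 r0 by (rule mult_right_mono)
  ultimately have ge: "cmod (ep - ep') \<ge> r" by simp
  have "cmod (ep - ep') \<le> e + cmod ep'" unfolding e_def by (rule norm_triangle_ineq4)
  also have "cmod ep' = 1 / e" unfolding ep'_inv e_def by (simp add: norm_divide)
  also have "1 / e < 1" using e1' by simp
  finally have er: "e > r - 1" using ge by simp
  define F where "F = cmod E"
  have Fe: "F = e ^ (n+1)" unfolding F_def E_def e_def by (simp only: norm_power)
  have "e ^ 3 \<le> e ^ (n+1)" using e1' n2 by (intro power_increasing) auto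
  moreover have "(r - 1) ^ 3 < e ^ 3" using er r100 by (intro power_strict_mono) auto
  ultimately have F3: "F > (r - 1)^3" unfolding Fe by simp
  have F1: "F > 1" unfolding Fe using e1' by (intro one_less_power) auto
  have nE': "cmod (1 / E) = 1 / F" unfolding F_def by (simp add: norm_divide)
  have "cmod tn \<le> F + 1 / F" unfolding tnE using norm_triangle_ineq[of E "1/E"] nE' F_def by simp
  also have "\<dots> \<le> F + 1" using F1 by simp
  finally have tnb: "cmod tn \<le> F + 1" .
  have "F - 1 / F \<le> cmod (E - 1 / E)" using norm_triangle_ineq2[of E "1/E"] nE' F_def by simp
  moreover have "cmod (E - 1 / E) = cmod un * r" unfolding unE[symmetric] r_def by (simp add: norm_mult)
  moreover have "1 / F \<le> 1" using F1 by simp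
  ultimately have "F - 1 \<le> cmod un * r" by linarith
  hence "(F - 1)^2 \<le> (cmod un * r)^2" using F1 by (intro power_mono) auto
  hence sq: "4 * (F - 1)^2 \<le> 4 * (cmod un)^2 * r^2" by (simp add: power_mult_distrib)
  have "9 * r^2 * cmod tn \<le> 9 * r^2 * (F + 1)" using tnb by (intro mult_left_mono) auto
  also have "\<dots> < 4 * (F - 1)^2" by (rule final_ineq[OF r100 F3])
  also have "\<dots> \<le> 4 * (cmod un)^2 * r^2" by (rule sq)
  finally have "r^2 * (9 * cmod tn) < r^2 * (4 * (cmod un)^2)" by (simp add: algebra_simps)
  hence "9 * cmod tn < 4 * (cmod un)^2" using mult_less_cancel_left_pos[of "r^2"] r100 by simp
  thus "cmod tn < 4 / 9 * (cmod un)^2" by simp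
qed simp

end
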